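(* Consider the optimization problem $$\mathcal{P}_1:\ \min_{\{I_{G,i},I_{H,i},I_{D,i},p_{G,i},p_{H,i}\}_{i=1}^N}\ \sum_{n=1}^N \big(w_G\, p_{G,n}\tau + w_D I_{D,n}\big)$$ subject to, for all $i\in\mathcal{N}=\{1,\dots,N\}$: $I_{G,i}+I_{H,i}+I_{D,i}=1$; $\sum_{l=1}^{i} p_{H,l}\tau\le \sum_{n=1}^{i}E_{H,n}$; $\sum_{j\in\{G,H\}} I_{j,i}\, r(p_{j,i},h_{j,i})\ge (1-I_{D,i})R$; $0\le p_{j,i}\le p_j^{\max}$ for $j\in\{G,H\}$; $I_{j,i}\in\{0,1\}$ for $j\in\{G,H,D\}$. Consider also the zero-one integer program $$\hat{\mathcal{P}}_1:\ \min_{\{\alpha_i\}}\ \sum_{n=1}^N (1-\alpha_n)c_n\quad\text{s.t.}\quad \sum_{k=1}^{i}\alpha_k p^{inv}_{H,k}\tau\le\sum_{l=1}^{i}E_{H,l},\ \ \alpha_i p^{inv}_{H,i}\le p_H^{\max},\ \ \alpha_i\in\{0,1\},\ \ \forall i\in\mathcal{N},$$ where $p^{inv}_{j,i}=(2^{R/(W\tau)}-1)\sigma^2 h_{j,i}^{-1}$ for $j\in\{G,H\}$, $\kappa=\min\{p_G^{\max},\,w_D(w_G\tau)^{-1}\}$, and $c_i=w_D$ if $p^{inv}_{G,i}>\kappa$ and $c_i=w_G p^{inv}_{G,i}\tau$ if $p^{inv}_{G,i}\le\kappa$. Then $\mathcal{P}_1$ is equivalent to $\hat{\mathcal{P}}_1$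 in the following sense: for any feasible $\{\alpha_i\}$ of $\hat{\mathcal{P}}_1$, the assignment $I_{H,i}=\alpha_i$, $I_{G,i}=(1-\alpha_i)\mathbf{1}\{p^{inv}_{G,i}\le\kappa\}$, $I_{D,i}=1-I_{G,i}-I_{H,i}$, $p_{j,i}=I_{j,i}p^{inv}_{j,i}$ ($j\in\{G,H\}$) is the corresponding solution of $\mathcal{P}_1$; the two problems have the same optimal value; and if $\{\alpha_i\}$ is optimal for $\hat{\mathcal{P}}_1$, then the corresponding $\{I_{G,i},I_{H,i},I_{D,i}\}$, $\{p_{H,i}\}$, $\{p_{G,i}\}$ are optimal for $\mathcal{P}_1$.
   Context: A hybrid energy supply network: a grid-powered base station (GP-BS, index $G$) and an energy-harvesting base station (EH-BS, index $H$) serve one user over $N$ blocks of length $\tau>0$. In each block one packet of $R>0$ bits arrives; it is sent by the GP-BS ($I_{G,i}=1$), by the EH-BS ($I_{H,i}=1$), or dropped ($I_{D,i}=1$). $p_{G,i},p_{H,i}\ge 0$ are transmit powers, $p_G^{\max},p_H^{\max}>0$ peak powers, $E_{H,i}\ge0$ is the energy harvested by the EH-BS at the start of block $i$, $h_{G,i},h_{H,i}>0$ are the channel gains, and $r(p,h)=\tau W\log_2(1+h\sigma^{-2}p)$ with bandwidth $W>0$ and noise variance $\sigma^2>0$. The weights satisfy $w_G,w_D>0$. $\mathbf{1}\{\cdot\}$ is the indicator function. *)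

theory Defs
  imports Complex_Main
begin

text \<open>Blocks are indexed by 1..N. The noise variance sigma^2 is the parameter s2.
  A decision of P1 is a tuple (IG, IH, ID, pG, pH) of functions on block indices.\<close>

type_synonym decision =
  "(nat \<Rightarrow> real) \<times> (nat \<Rightarrow> real) \<times> (nat \<Rightarrow> real) \<times> (nat \<Rightarrow> real) \<times> (nat \<Rightarrow> real)"

definition rate :: "real \<Rightarrow> real \<Rightarrow> real \<Rightarrow> real \<Rightarrow> real \<Rightarrow> real" where
  "rate \<tau> W s2 p h = \<tau> * W * log 2 (1 + h * p / s2)"

definition feasP1 ::
  "nat \<Rightarrow> real \<Rightarrow> real \<Rightarrow> real \<Rightarrow> real \<Rightarrow> real \<Rightarrow> real \<Rightarrow>
   (nat \<Rightarrow> real) \<Rightarrow> (nat \<Rightarrow> real) \<Rightarrow> (nat \<Rightarrow> real) \<Rightarrow> decision \<Rightarrow> bool" where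
  "feasP1 N \<tau> W s2 R pGmax pHmax E hG hH d =
     (case d of (IG, IH, ID, pG, pH) \<Rightarrow>
       (\<forall>i\<in>{1..N}.
          IG i + IH i + ID i = 1
        \<and> (\<Sum>l=1..i. pH l * \<tau>) \<le> (\<Sum>n=1..i. E n)
        \<and> IG i * rate \<tau> W s2 (pG i) (hG i) + IH i * rate \<tau> W s2 (pH i) (hH i) \<ge> (1 - ID i) * R
        \<and> 0 \<le> pG i \<and> pG i \<le> pGmax
        \<and> 0 \<le> pH i \<and> pH i \<le> pHmax
        \<and> IG i \<in> {0, 1} \<and> IH i \<in> {0, 1} \<and> ID i \<in> {0, 1}))"

definition objP1 :: "nat \<Rightarrow> real \<Rightarrow> real \<Rightarrow> real \<Rightarrow> decision \<Rightarrow> real" where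
  "objP1 N \<tau> wG wD d =
     (case d of (IG, IH, ID, pG, pH) \<Rightarrow> (\<Sum>n=1..N. wG * pG n * \<tau> + wD * ID n))"

definition optP1 ::
  "nat \<Rightarrow> real \<Rightarrow> real \<Rightarrow> real \<Rightarrow> real \<Rightarrow> real \<Rightarrow> real \<Rightarrow> real \<Rightarrow> real \<Rightarrow>
   (nat \<Rightarrow> real) \<Rightarrow> (nat \<Rightarrow> real) \<Rightarrow> (nat \<Rightarrow> real) \<Rightarrow> decision \<Rightarrow> bool" where
  "optP1 N \<tau> W s2 R pGmax pHmax wG wD E hG hH d =
     (feasP1 N \<tau> W s2 R pGmax pHmax E hG hH d \<and>
      (\<forall>d'. feasP1 N \<tau> W s2 R pGmax pHmax E hG hH d' \<longrightarrow>
             objP1 N \<tau> wG wD d \<le> objP1 N \<tau> wG wD d'))"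

definition pinv :: "real \<Rightarrow> real \<Rightarrow> real \<Rightarrow> real \<Rightarrow> real \<Rightarrow> real" where
  "pinv \<tau> W s2 R h = (2 powr (R / (W * \<tau>)) - 1) * s2 / h"

definition kappa :: "real \<Rightarrow> real \<Rightarrow> real \<Rightarrow> real \<Rightarrow> real" where
  "kappa \<tau> pGmax wG wD = min pGmax (wD / (wG * \<tau>))"

definition cost :: "real \<Rightarrow> real \<Rightarrow> real \<Rightarrow> real \<Rightarrow> real \<Rightarrow> real \<Rightarrow> real \<Rightarrow> real \<Rightarrow> real" where
  "cost \<tau> W s2 R pGmax wG wD hGi =
     (if pinv \<tau> W s2 R hGi > kappa \<tau> pGmax wG wD then wD
      else wG * pinv \<tau> W s2 R hGi * \<tau>)"

definition feasP1hat ::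
  "nat \<Rightarrow> real \<Rightarrow> real \<Rightarrow> real \<Rightarrow> real \<Rightarrow> real \<Rightarrow>
   (nat \<Rightarrow> real) \<Rightarrow> (nat \<Rightarrow> real) \<Rightarrow> (nat \<Rightarrow> real) \<Rightarrow> bool" where
  "feasP1hat N \<tau> W s2 R pHmax E hH \<alpha> =
     (\<forall>i\<in>{1..N}.
        (\<Sum>k=1..i. \<alpha> k * pinv \<tau> W s2 R (hH k) * \<tau>) \<le> (\<Sum>l=1..i. E l)
      \<and> \<alpha> i * pinv \<tau> W s2 R (hH i) \<le> pHmax
      \<and> \<alpha> i \<in> {0, 1})"

definition objP1hat ::
  "nat \<Rightarrow> real \<Rightarrow> real \<Rightarrow> real \<Rightarrow> real \<Rightarrow> real \<Rightarrow> real \<Rightarrow> real \<Rightarrow>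
   (nat \<Rightarrow> real) \<Rightarrow> (nat \<Rightarrow> real) \<Rightarrow> real" where
  "objP1hat N \<tau> W s2 R pGmax wG wD hG \<alpha> =
     (\<Sum>n=1..N. (1 - \<alpha> n) * cost \<tau> W s2 R pGmax wG wD (hG n))"

definition optP1hat ::
  "nat \<Rightarrow> real \<Rightarrow> real \<Rightarrow> real \<Rightarrow> real \<Rightarrow> real \<Rightarrow> real \<Rightarrow> real \<Rightarrow> real \<Rightarrow>
   (nat \<Rightarrow> real) \<Rightarrow> (nat \<Rightarrow> real) \<Rightarrow> (nat \<Rightarrow> real) \<Rightarrow> (nat \<Rightarrow> real) \<Rightarrow> bool" where
  "optP1hat N \<tau> W s2 R pGmax pHmax wG wD E hG hH \<alpha> =
     (feasP1hat N \<tau> W s2 R pHmax E hH \<alpha> \<and>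
      (\<forall>\<beta>. feasP1hat N \<tau> W s2 R pHmax E hH \<beta> \<longrightarrow>
             objP1hat N \<tau> W s2 R pGmax wG wD hG \<alpha> \<le> objP1hat N \<tau> W s2 R pGmax wG wD hG \<beta>))"

definition assign ::
  "real \<Rightarrow> real \<Rightarrow> real \<Rightarrow> real \<Rightarrow> real \<Rightarrow> real \<Rightarrow> real \<Rightarrow>
   (nat \<Rightarrow> real) \<Rightarrow> (nat \<Rightarrow> real) \<Rightarrow> (nat \<Rightarrow> real) \<Rightarrow> decision" where
  "assign \<tau> W s2 R pGmax wG wD hG hH \<alpha> =
     (let IH = \<alpha>;
          IG = (\<lambda>i. (1 - \<alpha> i) * (if pinv \<tau> W s2 R (hG i) \<le> kappa \<tau> pGmax wG wD then 1 else 0));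
          ID = (\<lambda>i. 1 - IG i - IH i)
      in (IG, IH, ID,
          (\<lambda>i. IG i * pinv \<tau> W s2 R (hG i)),
          (\<lambda>i. IH i * pinv \<tau> W s2 R (hH i))))"

end

theory Submission
  imports Defs
begin
lemma rate_pinv:
  assumes "\<tau> > 0" "W > 0" "s2 > 0" "h > 0"
  shows "rate \<tau> W s2 (pinv \<tau> W s2 R h) h = R"
proof -
  have "1 + h * pinv \<tau> W s2 R h / s2 = 2 powr (R / (W * \<tau>))"
    using assms by (simp add: pinv_def field_simps)
  then show ?thesis using assms by (simp add: rate_def)
qed

lemma pinv_nonneg:
  assumes "\<tau> > 0" "W > 0" "s2 > 0" "h > 0" "R > 0"
  shows "pinv \<tau> W s2 R h \<ge> 0"
proof -
  have "R / (W * \<tau>) \<ge> 0" using assms by simp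
  hence "2 powr (R / (W * \<tau>)) \<ge> 1" by (simp add: ge_one_powr_ge_zero)
  thus ?thesis using assms unfolding pinv_def by (simp add: divide_nonneg_pos)
qed

lemma rate_ge:
  assumes "\<tau> > 0" "W > 0" "s2 > 0" "h > 0" "p \<ge> 0"
    and "rate \<tau> W s2 p h \<ge> R"
  shows "p \<ge> pinv \<tau> W s2 R h"
proof -
  have pos: "1 + h * p / s2 > 0" using assms by (simp add: add_pos_nonneg)
  have "R / (W * \<tau>) \<le> log 2 (1 + h * p / s2)"
    using assms by (simp add: rate_def pos_divide_le_eq mult.commute mult.left_commute)
  hence "2 powr (R / (W * \<tau>)) \<le> 1 + h * p / s2"
    using pos by (simp add: le_log_iff)
  hence "(2 powr (R / (W * \<tau>)) - 1) * s2 \<le> h * p" using assms by (simp add: field_simps)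
  thus ?thesis using assms unfolding pinv_def by (simp add: divide_le_eq mult.commute)
qed

context
  fixes N :: nat and \<tau> W s2 R pGmax pHmax wG wD :: real
    and E hG hH :: "nat \<Rightarrow> real"
  assumes A: "\<tau> > 0" "W > 0" "s2 > 0" "R > 0" "pGmax > 0" "pHmax > 0" "wG > 0" "wD > 0"
    and E0: "\<And>i. E i \<ge> 0" and hGp: "\<And>i. hG i > 0" and hHp: "\<And>i. hH i > 0"
begin

lemma kappa_le: "kappa \<tau> pGmax wG wD \<le> pGmax" "kappa \<tau> pGmax wG wD \<le> wD / (wG * \<tau>)"
  by (auto simp: kappa_def)

lemma cost_le_wD: "cost \<tau> W s2 R pGmax wG wD (hG i) \<le> wD"
proof -
  have "pinv \<tau> W s2 R (hG i) \<le> kappa \<tau> pGmax wG wD \<Longrightarrow> wG * pinv \<tau> W s2 R (hG i) * \<tau> \<le> wD"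
  proof -
    assume h: "pinv \<tau> W s2 R (hG i) \<le> kappa \<tau> pGmax wG wD"
    have "wG * \<tau> * pinv \<tau> W s2 R (hG i) \<le> wG * \<tau> * kappa \<tau> pGmax wG wD"
      using h A by (intro mult_left_mono) auto
    also have "\<dots> \<le> wD" using kappa_le(2) A by (simp add: le_divide_eq mult.commute mult.left_commute)
    finally show ?thesis by (simp add: mult.commute mult.left_commute)
  qed
  thus ?thesis by (simp add: cost_def)
qed

lemma cost_nonneg: "cost \<tau> W s2 R pGmax wG wD (hG i) \<ge> 0"
  using pinv_nonneg[OF A(1-3) hGp A(4), of i] A by (simp add: cost_def)

lemma partA:
  assumes F: "feasP1hat N \<tau> W s2 R pHmax E hH \<alpha>"
  shows "feasP1 N \<tau> W s2 R pGmax pHmax E hG hH (assign \<tau> W s2 R pGmax wG wD hG hH \<alpha>)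
       \<and> objP1 N \<tau> wG wD (assign \<tau> W s2 R pGmax wG wD hG hH \<alpha>)
           = objP1hat N \<tau> W s2 R pGmax wG wD hG \<alpha>"
proof
  show "feasP1 N \<tau> W s2 R pGmax pHmax E hG hH (assign \<tau> W s2 R pGmax wG wD hG hH \<alpha>)"
    unfolding feasP1_def assign_def Let_def prod.case
  proof
    fix i assume i: "i \<in> {1..N}"
    let ?pG = "pinv \<tau> W s2 R (hG i)" and ?pH = "pinv \<tau> W s2 R (hH i)" and ?k = "kappa \<tau> pGmax wG wD"
    have Fi: "(\<Sum>k=1..i. \<alpha> k * pinv \<tau> W s2 R (hH k) * \<tau>) \<le> (\<Sum>l=1..i. E l)"
      "\<alpha> i * ?pH \<le> pHmax" "\<alpha> i \<in> {0, 1}" using F i unfolding feasP1hat_def by auto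
    have rG: "rate \<tau> W s2 ?pG (hG i) = R" by (rule rate_pinv[OF A(1-3) hGp])
    have rH: "rate \<tau> W s2 ?pH (hH i) = R" by (rule rate_pinv[OF A(1-3) hHp])
    have nG: "?pG \<ge> 0" by (rule pinv_nonneg[OF A(1-3) hGp A(4)])
    have nH: "?pH \<ge> 0" by (rule pinv_nonneg[OF A(1-3) hHp A(4)])
    have sumeq: "(\<Sum>l=1..i. \<alpha> l * pinv \<tau> W s2 R (hH l) * \<tau>) = (\<Sum>k=1..i. \<alpha> k * pinv \<tau> W s2 R (hH k) * \<tau>)" by simp
    show "(1 - \<alpha> i) * (if ?pG \<le> ?k then 1 else 0) + \<alpha> i + (1 - (1 - \<alpha> i) * (if ?pG \<le> ?k then 1 else 0) - \<alpha> i) = 1 \<and>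
         (\<Sum>l = 1..i. \<alpha> l * pinv \<tau> W s2 R (hH l) * \<tau>) \<le> sum E {1..i} \<and>
         (1 - (1 - (1 - \<alpha> i) * (if ?pG \<le> ?k then 1 else 0) - \<alpha> i)) * R
         \<le> (1 - \<alpha> i) * (if ?pG \<le> ?k then 1 else 0) * rate \<tau> W s2 ((1 - \<alpha> i) * (if ?pG \<le> ?k then 1 else 0) * ?pG) (hG i) +
            \<alpha> i * rate \<tau> W s2 (\<alpha> i * ?pH) (hH i) \<and>
         0 \<le> (1 - \<alpha> i) * (if ?pG \<le> ?k then 1 else 0) * ?pG \<and>
         (1 - \<alpha> i) * (if ?pG \<le> ?k then 1 else 0) * ?pG \<le> pGmax \<and>
         0 \<le> \<alpha> i * ?pH \<and>
         \<alpha> i * ?pH \<le> pHmax \<and>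
         (1 - \<alpha> i) * (if ?pG \<le> ?k then 1 else 0) \<in> {0, 1} \<and>
         \<alpha> i \<in> {0, 1} \<and> 1 - (1 - \<alpha> i) * (if ?pG \<le> ?k then 1 else 0) - \<alpha> i \<in> {0, 1}"
      using Fi rG rH nG nH kappa_le(1) A by (auto split: if_splits)
  qed
  show "objP1 N \<tau> wG wD (assign \<tau> W s2 R pGmax wG wD hG hH \<alpha>) = objP1hat N \<tau> W s2 R pGmax wG wD hG \<alpha>"
    unfolding objP1_def objP1hat_def assign_def Let_def prod.case
  proof (rule sum.cong[OF refl])
    fix i assume i: "i \<in> {1..N}"
    have "\<alpha> i \<in> {0, 1}" using F i unfolding feasP1hat_def by auto
    thus "wG * ((1 - \<alpha> i) * (if pinv \<tau> W s2 R (hG i) \<le> kappa \<tau> pGmax wG wD then 1 else 0) * pinv \<tau> W s2 R (hG i)) * \<tau> +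
         wD * (1 - (1 - \<alpha> i) * (if pinv \<tau> W s2 R (hG i) \<le> kappa \<tau> pGmax wG wD then 1 else 0) - \<alpha> i) =
         (1 - \<alpha> i) * cost \<tau> W s2 R pGmax wG wD (hG i)"
      by (auto simp: cost_def)
  qed
qed

lemma partB:
  assumes F: "feasP1 N \<tau> W s2 R pGmax pHmax E hG hH (IG, IH, ID, pG, pH)"
  shows "feasP1hat N \<tau> W s2 R pHmax E hH IH
     \<and> objP1hat N \<tau> W s2 R pGmax wG wD hG IH \<le> objP1 N \<tau> wG wD (IG, IH, ID, pG, pH)"
proof -
  have Fi: "\<And>i. i \<in> {1..N} \<Longrightarrow> IG i + IH i + ID i = 1
        \<and> (\<Sum>l=1..i. pH l * \<tau>) \<le> (\<Sum>n=1..i. E n)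
        \<and> IG i * rate \<tau> W s2 (pG i) (hG i) + IH i * rate \<tau> W s2 (pH i) (hH i) \<ge> (1 - ID i) * R
        \<and> 0 \<le> pG i \<and> pG i \<le> pGmax
        \<and> 0 \<le> pH i \<and> pH i \<le> pHmax
        \<and> IG i \<in> {0, 1} \<and> IH i \<in> {0, 1} \<and> ID i \<in> {0, 1}"
    using F unfolding feasP1_def by auto
  have pHge: "IH i * pinv \<tau> W s2 R (hH i) \<le> pH i" if i: "i \<in> {1..N}" for i
  proof -
    note f = Fi[OF i]
    show ?thesis
    proof (cases "IH i = 1")
      case True
      hence "IG i = 0" "ID i = 0" using f by auto
      hence "rate \<tau> W s2 (pH i) (hH i) \<ge> R" using f True by (metis add_0 diff_zero mult_1 mult_zero_left)
      thus ?thesis using rate_ge[OF A(1-3) hHp, of "pH i" R] f True by simp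
    next
      case False
      hence "IH i = 0" using f by auto
      thus ?thesis using f by simp
    qed
  qed
  have "feasP1hat N \<tau> W s2 R pHmax E hH IH"
    unfolding feasP1hat_def
  proof
    fix i assume i: "i \<in> {1..N}"
    have "(\<Sum>k=1..i. IH k * pinv \<tau> W s2 R (hH k) * \<tau>) \<le> (\<Sum>l=1..i. pH l * \<tau>)"
      using i A(1) by (intro sum_mono mult_right_mono pHge) auto
    also have "\<dots> \<le> (\<Sum>l=1..i. E l)" using Fi[OF i] by simp
    finally show "(\<Sum>k=1..i. IH k * pinv \<tau> W s2 R (hH k) * \<tau>) \<le> (\<Sum>l=1..i. E l)
      \<and> IH i * pinv \<tau> W s2 R (hH i) \<le> pHmax \<and> IH i \<in> {0, 1}"
      using pHge[OF i] Fi[OF i] by auto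
  qed
  moreover have "objP1hat N \<tau> W s2 R pGmax wG wD hG IH \<le> objP1 N \<tau> wG wD (IG, IH, ID, pG, pH)"
    unfolding objP1hat_def objP1_def prod.case
  proof (rule sum_mono)
    fix i assume i: "i \<in> {1..N}"
    note f = Fi[OF i]
    let ?pG = "pinv \<tau> W s2 R (hG i)" and ?k = "kappa \<tau> pGmax wG wD"
    have rhs0: "0 \<le> wG * pG i * \<tau> + wD * ID i" using f A by auto
    have cases3: "(IH i = 1 \<and> IG i = 0 \<and> ID i = 0) \<or> (IG i = 1 \<and> IH i = 0 \<and> ID i = 0)
       \<or> (ID i = 1 \<and> IG i = 0 \<and> IH i = 0)" using f by auto
    show "(1 - IH i) * cost \<tau> W s2 R pGmax wG wD (hG i) \<le> wG * pG i * \<tau> + wD * ID i"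
    proof -
      { assume c: "IG i = 1 \<and> IH i = 0 \<and> ID i = 0"
        hence "rate \<tau> W s2 (pG i) (hG i) \<ge> R" using f by (metis add_0_right diff_zero mult_1 mult_zero_left)
        hence ge: "pG i \<ge> ?pG" using rate_ge[OF A(1-3) hGp, of "pG i" R] f by simp
        have "cost \<tau> W s2 R pGmax wG wD (hG i) \<le> wG * pG i * \<tau>"
        proof (cases "?pG > ?k")
          case True
          have "?pG \<le> pGmax" using ge f by simp
          hence "?k = wD / (wG * \<tau>)" using True by (auto simp: kappa_def)
          hence "wD / (wG * \<tau>) < pG i" using True ge by simp
          hence "wD < pG i * (wG * \<tau>)" using A by (simp add: divide_less_eq)
          thus ?thesis using True by (simp add: cost_def mult.commute mult.left_commute)
        next
          case False
          have "wG * ?pG * \<tau> \<le> wG * pG i * \<tau>" using ge A by simp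
          thus ?thesis using False by (simp add: cost_def)
        qed
        hence ?thesis using c by simp }
      moreover
      { assume c: "ID i = 1 \<and> IG i = 0 \<and> IH i = 0"
        have "0 \<le> wG * pG i * \<tau>" using f A by simp
        hence ?thesis using c cost_le_wD[of i] by simp }
      ultimately show ?thesis using cases3 rhs0 by auto
    qed
  qed
  ultimately show ?thesis by blast
qed

lemma partC:
  assumes F: "feasP1 N \<tau> W s2 R pGmax pHmax E hG hH d"
  shows "objP1 N \<tau> wG wD d \<ge> 0"
proof -
  obtain IG IH ID pG pH where d: "d = (IG, IH, ID, pG, pH)" by (cases d) auto
  have "\<forall>i\<in>{1..N}. 0 \<le> pG i \<and> ID i \<in> {0,1}" using F unfolding d feasP1_def by auto
  hence "\<forall>i\<in>{1..N}. 0 \<le> wG * pG i * \<tau> + wD * ID i" using A by auto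
  thus ?thesis unfolding d objP1_def by (auto intro: sum_nonneg)
qed

lemma partB': 
  assumes F: "feasP1 N \<tau> W s2 R pGmax pHmax E hG hH d"
  shows "\<exists>\<beta>. feasP1hat N \<tau> W s2 R pHmax E hH \<beta>
     \<and> objP1hat N \<tau> W s2 R pGmax wG wD hG \<beta> \<le> objP1 N \<tau> wG wD d"
proof -
  obtain IG IH ID pG pH where d: "d = (IG, IH, ID, pG, pH)" by (cases d) auto
  show ?thesis using partB F unfolding d by blast
qed

lemma feas0: "feasP1hat N \<tau> W s2 R pHmax E hH (\<lambda>_. 0)"
  unfolding feasP1hat_def using A E0 by (auto intro: sum_nonneg)

end

theorem lemma1:
  fixes N :: nat and \<tau> W s2 R pGmax pHmax wG wD :: real
    and E hG hH :: "nat \<Rightarrow> real"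
  assumes "\<tau> > 0" "W > 0" "s2 > 0" "R > 0" "pGmax > 0" "pHmax > 0" "wG > 0" "wD > 0"
    and "\<And>i. E i \<ge> 0" "\<And>i. hG i > 0" "\<And>i. hH i > 0"
  shows
    "(\<forall>\<alpha>. feasP1hat N \<tau> W s2 R pHmax E hH \<alpha> \<longrightarrow>
         feasP1 N \<tau> W s2 R pGmax pHmax E hG hH (assign \<tau> W s2 R pGmax wG wD hG hH \<alpha>)
       \<and> objP1 N \<tau> wG wD (assign \<tau> W s2 R pGmax wG wD hG hH \<alpha>)
           = objP1hat N \<tau> W s2 R pGmax wG wD hG \<alpha>)
   \<and> (INF d \<in> {d. feasP1 N \<tau> W s2 R pGmax pHmax E hG hH d}. objP1 N \<tau> wG wD d)
       = (INF \<alpha> \<in> {\<alpha>. feasP1hat N \<tau> W s2 R pHmax E hH \<alpha>}. objP1hat N \<tau> W s2 R pGmax wG wD hG \<alpha>)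
   \<and> (\<forall>\<alpha>. optP1hat N \<tau> W s2 R pGmax pHmax wG wD E hG hH \<alpha> \<longrightarrow>
         optP1 N \<tau> W s2 R pGmax pHmax wG wD E hG hH (assign \<tau> W s2 R pGmax wG wD hG hH \<alpha>))"
proof -
  note L = partA[where N=N and E=E and hG=hG and hH=hH and \<tau>=\<tau> and W=W and ?s2.0=s2 and R=R and pGmax=pGmax and pHmax=pHmax and wG=wG and wD=wD, OF assms] partB'[where N=N and E=E and hG=hG and hH=hH and \<tau>=\<tau> and W=W and ?s2.0=s2 and R=R and pGmax=pGmax and pHmax=pHmax and wG=wG and wD=wD, OF assms] partC[where N=N and E=E and hG=hG and hH=hH and \<tau>=\<tau> and W=W and ?s2.0=s2 and R=R and pGmax=pGmax and pHmax=pHmax and wG=wG and wD=wD, OF assms] feas0[where N=N and E=E and hH=hH and \<tau>=\<tau> and W=W and R=R and pHmax=pHmax, OF assms]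
  let ?S1 = "(\<lambda>d. objP1 N \<tau> wG wD d) ` {d. feasP1 N \<tau> W s2 R pGmax pHmax E hG hH d}"
  let ?S2 = "(\<lambda>\<alpha>. objP1hat N \<tau> W s2 R pGmax wG wD hG \<alpha>) ` {\<alpha>. feasP1hat N \<tau> W s2 R pHmax E hH \<alpha>}"
  have ne2: "?S2 \<noteq> {}" using L(4) by blast
  have ne1: "?S1 \<noteq> {}" using L(4) L(1) by blast
  have bdd1: "bdd_below ?S1" using L(3) by (auto intro!: bdd_belowI[of _ 0])
  have bdd2: "bdd_below ?S2"
  proof (rule bdd_belowI[of _ 0])
    fix x assume "x \<in> ?S2"
    then obtain \<alpha> where "feasP1hat N \<tau> W s2 R pHmax E hH \<alpha>" and x: "x = objP1hat N \<tau> W s2 R pGmax wG wD hG \<alpha>" by auto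
    thus "0 \<le> x" using L(1) L(3) by metis
  qed
  have "Inf ?S1 \<le> Inf ?S2"
  proof (rule cInf_greatest[OF ne2])
    fix y assume "y \<in> ?S2"
    then obtain \<alpha> where "feasP1hat N \<tau> W s2 R pHmax E hH \<alpha>" and y: "y = objP1hat N \<tau> W s2 R pGmax wG wD hG \<alpha>" by auto
    hence "y \<in> ?S1" using L(1) by force
    thus "Inf ?S1 \<le> y" using bdd1 by (rule cInf_lower)
  qed
  moreover have "Inf ?S2 \<le> Inf ?S1"
  proof (rule cInf_greatest[OF ne1])
    fix x assume "x \<in> ?S1"
    then obtain d where "feasP1 N \<tau> W s2 R pGmax pHmax E hG hH d" and x: "x = objP1 N \<tau> wG wD d" by auto
    then obtain \<beta> where b: "feasP1hat N \<tau> W s2 R pHmax E hH \<beta>"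
      "objP1hat N \<tau> W s2 R pGmax wG wD hG \<beta> \<le> x" using L(2) by blast
    have "Inf ?S2 \<le> objP1hat N \<tau> W s2 R pGmax wG wD hG \<beta>" using b(1) bdd2 by (intro cInf_lower) auto
    thus "Inf ?S2 \<le> x" using b(2) by linarith
  qed
  ultimately have inf: "Inf ?S1 = Inf ?S2" by linarith
  have opt: "optP1 N \<tau> W s2 R pGmax pHmax wG wD E hG hH (assign \<tau> W s2 R pGmax wG wD hG hH \<alpha>)"
    if o: "optP1hat N \<tau> W s2 R pGmax pHmax wG wD E hG hH \<alpha>" for \<alpha>
  proof -
    have f: "feasP1hat N \<tau> W s2 R pHmax E hH \<alpha>" using o unfolding optP1hat_def by blast
    show ?thesis unfolding optP1_def
    proof (intro conjI allI impI)
      show "feasP1 N \<tau> W s2 R pGmax pHmax E hG hH (assign \<tau> W s2 R pGmax wG wD hG hH \<alpha>)" using L(1)[OF f] by blast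
      fix d' assume d': "feasP1 N \<tau> W s2 R pGmax pHmax E hG hH d'"
      then obtain \<beta> where b: "feasP1hat N \<tau> W s2 R pHmax E hH \<beta>"
        "objP1hat N \<tau> W s2 R pGmax wG wD hG \<beta> \<le> objP1 N \<tau> wG wD d'" using L(2) by blast
      have "objP1hat N \<tau> W s2 R pGmax wG wD hG \<alpha> \<le> objP1hat N \<tau> W s2 R pGmax wG wD hG \<beta>"
        using o b(1) unfolding optP1hat_def by blast
      thus "objP1 N \<tau> wG wD (assign \<tau> W s2 R pGmax wG wD hG hH \<alpha>) \<le> objP1 N \<tau> wG wD d'"
        using L(1)[OF f] b(2) by linarith
    qed
  qed
  show ?thesis using L(1) inf opt by blast
qed

end
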